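(* Let $\sigma,\zeta,\wp$ be the Weierstrass functions with invariants $g_2,g_3$, let $v$ be a point which is not a pole of $\wp$, and let $\psi(u,v)=\ln\sigma(v)-\ln\sigma(v-u)-\zeta(v)u$ (the branch vanishing at $u=0$). Then there are polynomials $P_k\in\mathbb{Z}[x_2,x_3,x_4]$, independent of $v,g_2,g_3$, such that near $u=0$ \[ \psi(u,v)=\sum_{k\ge2}P_k(a_2,a_3,a_4)\frac{u^k}{k!},\qquad a_2=\wp(v),\ a_3=\wp'(v),\ a_4=\tfrac12g_2; \] i.e. $\psi(u,v)$ is a Hurwitz series over $\mathbb{Z}[a_2,a_3,a_4]$.
   Context: $\wp(u)=\wp(u;g_2,g_3)$ is the Weierstrass function ($\wp'^2=4\wp^3-g_2\wp-g_3$, $\wp=u^{-2}+O(u^2)$), $\sigma$ the Weierstrass sigma function (entire, odd, $\sigma(u)=u+O(u^5)$), $\zeta=\sigma'/\sigma$, $\wp=-\zeta'$. A Hurwitz series over a ring $A$ is a series $\sum_k\varphi_ku^k/k!$ with all $\varphi_k\in A$. *)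

theory Defs
  imports "HOL-Complex_Analysis.Complex_Analysis" "HOL-Library.Landau_Symbols"
begin

definition wzeta :: "(complex \<Rightarrow> complex) \<Rightarrow> complex \<Rightarrow> complex" where
  "wzeta \<sigma> u = deriv \<sigma> u / \<sigma> u"

definition wp :: "(complex \<Rightarrow> complex) \<Rightarrow> complex \<Rightarrow> complex" where
  "wp \<sigma> u = - deriv (wzeta \<sigma>) u"

text \<open>These conditions determine sigma uniquely.\<close>
definition weierstrass_sigma :: "complex \<Rightarrow> complex \<Rightarrow> (complex \<Rightarrow> complex) \<Rightarrow> bool" where
  "weierstrass_sigma g2 g3 \<sigma> \<longleftrightarrow>
     \<sigma> holomorphic_on UNIV \<and>
     (\<forall>u. \<sigma> (-u) = - \<sigma> u) \<and>
     (\<lambda>u. \<sigma> u - u) \<in> O[at 0](\<lambda>u. u ^ 5) \<and>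
     (\<forall>u. \<sigma> u \<noteq> 0 \<longrightarrow>
        (deriv (wp \<sigma>) u)\<^sup>2 = 4 * (wp \<sigma> u) ^ 3 - g2 * wp \<sigma> u - g3)"

text \<open>Integer polynomials in three variables, as finitely supported coefficient
  maps on exponent triples, and their evaluation.\<close>
definition int_mpoly3 :: "(nat \<times> nat \<times> nat \<Rightarrow> int) \<Rightarrow> bool" where
  "int_mpoly3 c \<longleftrightarrow> finite {e. c e \<noteq> 0}"

definition eval_mpoly3 :: "(nat \<times> nat \<times> nat \<Rightarrow> int) \<Rightarrow> complex \<Rightarrow> complex \<Rightarrow> complex \<Rightarrow> complex" where
  "eval_mpoly3 c x y z =
     (\<Sum>e\<in>{e. c e \<noteq> 0}. of_int (c e) * x ^ fst e * y ^ fst (snd e) * z ^ snd (snd e))"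

definition wpsi :: "(complex \<Rightarrow> complex) \<Rightarrow> complex \<Rightarrow> complex \<Rightarrow> complex" where
  "wpsi \<sigma> u v = - Ln (\<sigma> (v - u) / \<sigma> v) - wzeta \<sigma> v * u"

end

theory Submission
  imports Defs
begin


fun meval :: "int \<times> nat \<times> nat \<times> nat \<Rightarrow> complex \<Rightarrow> complex \<Rightarrow> complex \<Rightarrow> complex" where
  "meval (a, i, j, k) x y z = of_int a * x ^ i * y ^ j * z ^ k"

definition leval :: "(int \<times> nat \<times> nat \<times> nat) list \<Rightarrow> complex \<Rightarrow> complex \<Rightarrow> complex \<Rightarrow> complex" where
  "leval L x y z = (\<Sum>m\<leftarrow>L. meval m x y z)"

definition toC :: "(int \<times> nat \<times> nat \<times> nat) list \<Rightarrow> nat \<times> nat \<times> nat \<Rightarrow> int" where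
  "toC L e = (\<Sum>m\<leftarrow>L. if snd m = e then fst m else 0)"

lemma toC_supp: "{e. toC L e \<noteq> 0} \<subseteq> snd ` set L"
proof
  fix e assume "e \<in> {e. toC L e \<noteq> 0}"
  hence "(\<Sum>m\<leftarrow>L. if snd m = e then fst m else 0) \<noteq> 0" by (simp add: toC_def)
  then obtain m where "m \<in> set L" "snd m = e"
    by (induction L) (auto split: if_splits)
  thus "e \<in> snd ` set L" by force
qed

lemma toC_int: "int_mpoly3 (toC L)"
  unfolding int_mpoly3_def using toC_supp finite_subset by blast

lemma toC_sumS:
  assumes "finite S"
  shows "snd ` set L \<subseteq> S \<Longrightarrow>
    (\<Sum>e\<in>S. of_int (toC L e) * x ^ fst e * y ^ fst (snd e) * z ^ snd (snd e)) = leval L x y z"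
proof (induction L)
  case Nil
  then show ?case by (simp add: toC_def leval_def)
next
  case (Cons m L)
  obtain a i j k where m: "m = (a, i, j, k)" by (cases m) auto
  have mS: "(i, j, k) \<in> S" using Cons.prems m by auto
  have tc: "toC (m # L) e = (if (i,j,k) = e then a else 0) + toC L e" for e
    by (simp add: toC_def m)
  have "(\<Sum>e\<in>S. of_int (toC (m # L) e) * x ^ fst e * y ^ fst (snd e) * z ^ snd (snd e))
     = (\<Sum>e\<in>S. (if (i,j,k) = e then of_int a * x ^ fst e * y ^ fst (snd e) * z ^ snd (snd e) else 0))
       + (\<Sum>e\<in>S. of_int (toC L e) * x ^ fst e * y ^ fst (snd e) * z ^ snd (snd e))"
    unfolding tc by (simp add: sum.distrib distrib_right) (rule sum.cong; auto)
  also have "\<dots> = meval m x y z + leval L x y z"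
    using Cons mS assms by (simp add: m)
  finally show ?case by (simp add: leval_def)
qed

lemma toC_eval: "eval_mpoly3 (toC L) x y z = leval L x y z"
proof -
  have "eval_mpoly3 (toC L) x y z = 
    (\<Sum>e\<in>snd ` set L. of_int (toC L e) * x ^ fst e * y ^ fst (snd e) * z ^ snd (snd e))"
    unfolding eval_mpoly3_def
    by (rule sum.mono_neutral_left) (use toC_supp in auto)
  also have "\<dots> = leval L x y z" by (rule toC_sumS) auto
  finally show ?thesis .
qed

fun Dm :: "int \<times> nat \<times> nat \<times> nat \<Rightarrow> (int \<times> nat \<times> nat \<times> nat) list" where
  "Dm (a, i, j, k) = [(a * int i, i - 1, j + 1, k), (6 * a * int j, i + 2, j - 1, k),
                      (- a * int j, i, j - 1, k + 1)]"

definition DL :: "(int \<times> nat \<times> nat \<times> nat) list \<Rightarrow> (int \<times> nat \<times> nat \<times> nat) list" where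
  "DL L = concat (map Dm L)"

lemma deriv_mono:
  assumes f: "(f has_field_derivative g w) (at w)" and g: "(g has_field_derivative g1) (at w)"
    and g1: "g1 = 6 * (f w)^2 - c"
  shows "((\<lambda>w. meval m (f w) (g w) c) has_field_derivative leval (Dm m) (f w) (g w) c) (at w)"
proof -
  obtain a i j k where m: "m = (a, i, j, k)" by (cases m) auto
  have "((\<lambda>w. of_int a * f w ^ i * g w ^ j * c ^ k) has_field_derivative
     of_int a * (of_nat i * f w ^ (i - 1) * g w) * g w ^ j * c ^ k +
     of_int a * f w ^ i * (of_nat j * g w ^ (j - 1) * g1) * c ^ k) (at w)"
    by (auto intro!: derivative_eq_intros f g) (simp add: algebra_simps)
  moreover have "of_int a * (of_nat i * f w ^ (i - 1) * g w) * g w ^ j * c ^ k +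
     of_int a * f w ^ i * (of_nat j * g w ^ (j - 1) * g1) * c ^ k = leval (Dm m) (f w) (g w) c"
  proof -
    have e1: "of_nat i * f w ^ (i - 1) * g w * g w ^ j = of_nat i * f w ^ (i - 1) * g w ^ (j+1)"
      by simp
    have e2: "of_nat j * g w ^ (j - 1) * f w ^ i * g1 = 
       of_nat j * 6 * f w ^ (i+2) * g w ^ (j - 1) - of_nat j * f w ^ i * g w ^ (j - 1) * c"
      by (simp add: g1 power_add algebra_simps power2_eq_square)
    show ?thesis unfolding m leval_def g1
      using e1 by (simp add: algebra_simps power_add power2_eq_square)
  qed
  ultimately show ?thesis by (simp add: m)
qed

lemma deriv_leval:
  assumes f: "(f has_field_derivative g w) (at w)" and g: "(g has_field_derivative g1) (at w)"
    and g1: "g1 = 6 * (f w)^2 - c"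
  shows "((\<lambda>w. leval L (f w) (g w) c) has_field_derivative leval (DL L) (f w) (g w) c) (at w)"
proof (induction L)
  case Nil
  then show ?case by (simp add: leval_def DL_def)
next
  case (Cons m L)
  have "((\<lambda>w. meval m (f w) (g w) c + leval L (f w) (g w) c) has_field_derivative
      leval (Dm m) (f w) (g w) c + leval (DL L) (f w) (g w) c) (at w)"
    by (intro DERIV_add deriv_mono[OF f g g1] Cons)
  thus ?case by (simp add: leval_def DL_def)
qed



locale ws =
  fixes g2 g3 :: complex and \<sigma> :: "complex \<Rightarrow> complex"
  assumes ws: "weierstrass_sigma g2 g3 \<sigma>"
begin

definition U where "U = {u. \<sigma> u \<noteq> 0}"

lemma hol: "\<sigma> holomorphic_on UNIV" using ws by (simp add: weierstrass_sigma_def)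
lemma odd: "\<sigma> (-u) = - \<sigma> u" using ws by (simp add: weierstrass_sigma_def)
lemma ode: "\<sigma> u \<noteq> 0 \<Longrightarrow> (deriv (wp \<sigma>) u)\<^sup>2 = 4 * (wp \<sigma> u) ^ 3 - g2 * wp \<sigma> u - g3"
  using ws by (simp add: weierstrass_sigma_def)
lemma sigma0: "\<sigma> 0 = 0" using odd[of 0] by simp

lemma openU: "open U"
proof -
  have "continuous_on UNIV \<sigma>" using hol holomorphic_on_imp_continuous_on by blast
  thus ?thesis unfolding U_def by (rule open_Collect_neq) simp
qed

lemma dsig_hol: "deriv \<sigma> holomorphic_on UNIV"
  using hol by (intro holomorphic_deriv) auto

lemma zeta_eq: "wzeta \<sigma> = (\<lambda>u. deriv \<sigma> u / \<sigma> u)"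
  by (rule ext) (simp add: wzeta_def)

lemma zeta_hol: "wzeta \<sigma> holomorphic_on U"
  unfolding zeta_eq
  by (intro holomorphic_intros holomorphic_on_subset[OF dsig_hol] holomorphic_on_subset[OF hol])
     (auto simp: U_def)

lemma wp_eq: "wp \<sigma> = (\<lambda>u. - deriv (wzeta \<sigma>) u)"
  by (rule ext) (simp add: wp_def)

lemma wp_hol: "wp \<sigma> holomorphic_on U"
  unfolding wp_eq by (intro holomorphic_intros zeta_hol openU)

lemma wp1_hol: "deriv (wp \<sigma>) holomorphic_on U"
  by (intro holomorphic_intros wp_hol openU)

lemma wp2_hol: "deriv (deriv (wp \<sigma>)) holomorphic_on U"
  by (intro holomorphic_intros wp1_hol openU)

lemma d_sig: "(\<sigma> has_field_derivative deriv \<sigma> w) (at w)"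
  using hol holomorphic_derivI by blast

lemma d_zeta: "w \<in> U \<Longrightarrow> (wzeta \<sigma> has_field_derivative - wp \<sigma> w) (at w)"
  using holomorphic_derivI[OF zeta_hol openU] by (simp add: wp_def)

lemma d_wp: "w \<in> U \<Longrightarrow> (wp \<sigma> has_field_derivative deriv (wp \<sigma>) w) (at w)"
  using holomorphic_derivI[OF wp_hol openU] by simp

lemma d_wp1: "w \<in> U \<Longrightarrow> (deriv (wp \<sigma>) has_field_derivative deriv (deriv (wp \<sigma>)) w) (at w)"
  using holomorphic_derivI[OF wp1_hol openU] by simp

lemma step1:
  assumes w: "w \<in> U"
  shows "2 * deriv (wp \<sigma>) w * deriv (deriv (wp \<sigma>)) w
       = (12 * (wp \<sigma> w)^2 - g2) * deriv (wp \<sigma>) w"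
proof -
  let ?f = "wp \<sigma>" and ?f1 = "deriv (wp \<sigma>)" and ?f2 = "deriv (deriv (wp \<sigma>))"
  have A: "((\<lambda>x. (?f1 x)^2) has_field_derivative 2 * ?f1 w * ?f2 w) (at w)"
    by (auto intro!: derivative_eq_intros d_wp1[OF w])
  have B0: "((\<lambda>x. 4 * (?f x)^3 - g2 * ?f x - g3) has_field_derivative
       (12 * (?f w)^2 - g2) * ?f1 w) (at w)"
    by (auto intro!: derivative_eq_intros d_wp[OF w] simp: algebra_simps power2_eq_square)
  have B: "((\<lambda>x. (?f1 x)^2) has_field_derivative (12 * (?f w)^2 - g2) * ?f1 w) (at w)"
    using has_field_derivative_transform_within_open[OF B0 openU w, of "\<lambda>x. (?f1 x)^2"] ode
    by (simp add: U_def)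
  show ?thesis using DERIV_unique[OF A B] .
qed

lemma nonconst:
  assumes "0 < e" "\<And>x. x \<in> ball w e \<Longrightarrow> x \<in> U \<and> wp \<sigma> x = c"
  shows False
proof -
  have BU: "ball w e \<subseteq> U" using assms by auto
  have "\<exists>d. \<forall>x\<in>ball w e. wzeta \<sigma> x + c * x = d"
  proof (rule has_field_derivative_zero_constant)
    fix x assume x: "x \<in> ball w e"
    have "((\<lambda>x. wzeta \<sigma> x + c * x) has_field_derivative - wp \<sigma> x + c) (at x)"
      using BU x by (auto intro!: derivative_eq_intros d_zeta)
    thus "((\<lambda>x. wzeta \<sigma> x + c * x) has_field_derivative 0) (at x within ball w e)"
      using assms(2)[OF x] by (auto intro: has_field_derivative_at_within)
  qed auto
  then obtain d where d: "\<And>x. x \<in> ball w e \<Longrightarrow> wzeta \<sigma> x + c * x = d" by blast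
  have E: "deriv \<sigma> x - (d - c * x) * \<sigma> x = 0" for x
  proof (rule analytic_continuation[where S = UNIV and U = "ball w e" and \<xi> = w and w = x and f = "\<lambda>x. deriv \<sigma> x - (d - c * x) * \<sigma> x"])
    show "(\<lambda>x. deriv \<sigma> x - (d - c * x) * \<sigma> x) holomorphic_on UNIV"
      by (intro holomorphic_intros hol) auto
    show "w islimpt ball w e" using assms(1) by (simp add: islimpt_ball)
    fix z assume z: "z \<in> ball w e"
    hence "\<sigma> z \<noteq> 0" using BU by (auto simp: U_def)
    moreover have "deriv \<sigma> z / \<sigma> z = d - c * z" using d[OF z] by (simp add: wzeta_def algebra_simps)
    ultimately show "deriv \<sigma> z - (d - c * z) * \<sigma> z = 0" by (simp add: field_simps)
  qed auto
  have "\<exists>K. \<forall>x\<in>UNIV. \<sigma> x * exp (c * x^2 / 2 - d * x) = K"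
  proof (rule has_field_derivative_zero_constant)
    fix x :: complex
    have "((\<lambda>x. \<sigma> x * exp (c * x^2 / 2 - d * x)) has_field_derivative
         (deriv \<sigma> x - (d - c * x) * \<sigma> x) * exp (c * x^2 / 2 - d * x)) (at x)"
      by (auto intro!: derivative_eq_intros d_sig simp: algebra_simps power2_eq_square)
    thus "((\<lambda>x. \<sigma> x * exp (c * x^2 / 2 - d * x)) has_field_derivative 0) (at x within UNIV)"
      using E[of x] by simp
  qed auto
  then obtain K where K: "\<And>x. \<sigma> x * exp (c * x^2 / 2 - d * x) = K" by blast
  have "K = 0" using K[of 0] sigma0 by simp
  hence "\<sigma> w = 0" using K[of w] by simp
  moreover have "w \<in> U" using BU assms(1) by auto
  ultimately show False by (simp add: U_def)
qed

lemma wp2_eq: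
  assumes w: "w \<in> U"
  shows "deriv (deriv (wp \<sigma>)) w = 6 * (wp \<sigma> w)^2 - g2 / 2"
proof (rule ccontr)
  define h where "h x = deriv (deriv (wp \<sigma>)) x - (6 * (wp \<sigma> x)^2 - g2 / 2)" for x
  assume "\<not> ?thesis"
  hence hw: "h w \<noteq> 0" by (simp add: h_def)
  have "h holomorphic_on U" unfolding h_def[abs_def]
    by (intro holomorphic_intros wp2_hol wp_hol)
  hence "continuous_on U h" by (rule holomorphic_on_imp_continuous_on)
  hence "isCont h w" using continuous_on_eq_continuous_at[OF openU] w by blast
  then obtain e1 where e1: "e1 > 0" "\<And>y. dist w y < e1 \<Longrightarrow> h y \<noteq> 0"
    using continuous_at_avoid[of w h 0] hw by blast
  obtain e2 where e2: "e2 > 0" "ball w e2 \<subseteq> U" using openU w openE by blast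
  define e where "e = min e1 e2"
  have e: "e > 0" using e1 e2 by (simp add: e_def)
  have inB: "x \<in> U" "h x \<noteq> 0" if "x \<in> ball w e" for x
    using that e1 e2 by (auto simp: e_def dist_commute)
  have z: "deriv (wp \<sigma>) x = 0" if "x \<in> ball w e" for x
  proof -
    have "2 * deriv (wp \<sigma>) x * h x = 0"
      using step1[OF inB(1)[OF that]] by (simp add: h_def algebra_simps)
    thus ?thesis using inB(2)[OF that] by simp
  qed
  have "\<exists>c. \<forall>x\<in>ball w e. wp \<sigma> x = c"
  proof (rule has_field_derivative_zero_constant)
    fix x assume x: "x \<in> ball w e"
    show "(wp \<sigma> has_field_derivative 0) (at x within ball w e)"
      using d_wp[OF inB(1)[OF x]] z[OF x] by (auto intro: has_field_derivative_at_within)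
  qed auto
  then obtain c where "\<And>x. x \<in> ball w e \<Longrightarrow> wp \<sigma> x = c" by blast
  thus False using inB(1) by (intro nonconst[OF e, of w c]) auto
qed

end

fun Q :: "nat \<Rightarrow> (int \<times> nat \<times> nat \<times> nat) list" where
  "Q 0 = [(1, 1, 0, 0)]"
| "Q (Suc n) = DL (Q n)"

definition sgnL :: "int \<Rightarrow> (int \<times> nat \<times> nat \<times> nat) list \<Rightarrow> (int \<times> nat \<times> nat \<times> nat) list" where
  "sgnL s L = map (\<lambda>m. (s * fst m, snd m)) L"

lemma leval_sgnL: "leval (sgnL s L) x y z = of_int s * leval L x y z"
proof (induction L)
  case Nil then show ?case by (simp add: leval_def sgnL_def)
next
  case (Cons m L)
  obtain a i j k where m: "m = (a, i, j, k)" by (cases m) auto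
  show ?case using Cons by (simp add: leval_def sgnL_def m algebra_simps)
qed

definition PP :: "nat \<Rightarrow> nat \<times> nat \<times> nat \<Rightarrow> int" where
  "PP n = toC (sgnL ((-1) ^ (n - 2)) (Q (n - 2)))"

context ws
begin

lemma d_leval:
  assumes w: "w \<in> U"
  shows "((\<lambda>w. leval L (wp \<sigma> w) (deriv (wp \<sigma>) w) (g2/2)) has_field_derivative
           leval (DL L) (wp \<sigma> w) (deriv (wp \<sigma>) w) (g2/2)) (at w)"
  by (rule deriv_leval[OF d_wp[OF w] d_wp1[OF w] wp2_eq[OF w]])

lemma main:
  assumes v: "\<sigma> v \<noteq> 0"
  shows "\<forall>\<^sub>F u in nhds 0.
           (\<lambda>k. eval_mpoly3 (PP (k + 2)) (wp \<sigma> v) (deriv (wp \<sigma>) v) (g2 / 2)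
                  * u ^ (k + 2) / fact (k + 2)) sums wpsi \<sigma> u v"
proof -
  define F where "F u = \<sigma> (v - u) / \<sigma> v" for u
  have contF: "isCont F x" for x
  proof -
    have "continuous_on UNIV \<sigma>" using hol holomorphic_on_imp_continuous_on by blast
    hence "isCont \<sigma> (v - x)" by (simp add: continuous_on_eq_continuous_at)
    thus ?thesis unfolding F_def[abs_def] using v
      by (intro continuous_intros) (auto intro: continuous_at_compose[of _ "\<lambda>u. v - u", unfolded o_def] continuous_intros)
  qed
  have "open (F -` ball 1 1)" by (rule continuous_open_vimage) (auto intro: contF)
  moreover have "0 \<in> F -` ball 1 1" using v by (simp add: F_def)
  ultimately obtain r where r: "r > 0" "ball 0 r \<subseteq> F -` ball 1 1" using openE by blast
  define B where "B = ball (0::complex) r"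
  have Bopen: "open B" by (simp add: B_def)
  have FB: "Re (F u) > 0" if "u \<in> B" for u
  proof -
    have "dist 1 (F u) < 1" using r that by (auto simp: B_def)
    hence "cmod (1 - F u) < 1" by (simp add: dist_norm)
    moreover have "\<bar>Re (1 - F u)\<bar> \<le> cmod (1 - F u)" by (rule abs_Re_le_cmod)
    ultimately show ?thesis by simp
  qed
  have FnR: "F u \<notin> \<real>\<^sub>\<le>\<^sub>0" if "u \<in> B" for u
    using FB[OF that] by (auto simp: complex_nonpos_Reals_iff)
  have vuU: "v - u \<in> U" if "u \<in> B" for u
    using FB[OF that] by (auto simp: F_def U_def)
  define \<psi> where "\<psi> u = wpsi \<sigma> u v" for u
  have \<psi>_eq: "\<psi> = (\<lambda>u. - Ln (F u) - wzeta \<sigma> v * u)"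
    by (rule ext) (simp add: \<psi>_def wpsi_def F_def)
  have dF: "(F has_field_derivative - deriv \<sigma> (v - u) / \<sigma> v) (at u)" for u
  proof -
    have "((\<lambda>u. \<sigma> (v - u)) has_field_derivative deriv \<sigma> (v - u) * (-1)) (at u)"
      by (rule DERIV_chain2[OF d_sig]) (auto intro!: derivative_eq_intros)
    thus ?thesis unfolding F_def[abs_def] using v
      by (auto intro!: derivative_eq_intros)
  qed
  have d\<psi>: "(\<psi> has_field_derivative wzeta \<sigma> (v - u) - wzeta \<sigma> v) (at u)" if u: "u \<in> B" for u
  proof -
    have dL: "((\<lambda>u. Ln (F u)) has_field_derivative inverse (F u) * (- deriv \<sigma> (v - u) / \<sigma> v)) (at u)"
      by (rule DERIV_chain2[OF has_field_derivative_Ln[OF FnR[OF u]] dF])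
    have "(\<psi> has_field_derivative - (inverse (F u) * (- deriv \<sigma> (v - u) / \<sigma> v)) - wzeta \<sigma> v) (at u)"
      unfolding \<psi>_eq by (rule DERIV_diff[OF DERIV_minus[OF dL]]) (auto intro!: derivative_eq_intros)
    moreover have "- (inverse (F u) * (- deriv \<sigma> (v - u) / \<sigma> v)) = wzeta \<sigma> (v - u)"
      using v vuU[OF u] by (simp add: F_def wzeta_def U_def field_simps)
    ultimately show ?thesis by simp
  qed
  have deriv\<psi>: "deriv \<psi> u = wzeta \<sigma> (v - u) - wzeta \<sigma> v" if "u \<in> B" for u
    using DERIV_imp_deriv[OF d\<psi>[OF that]] .
  have d2\<psi>: "(deriv \<psi> has_field_derivative wp \<sigma> (v - u)) (at u)" if u: "u \<in> B" for u
  proof -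
    have "((\<lambda>u. wzeta \<sigma> (v - u) - wzeta \<sigma> v) has_field_derivative - wp \<sigma> (v - u) * (-1) - 0) (at u)"
      by (intro derivative_intros DERIV_chain2[where g = "\<lambda>u. v - u" and x = u, OF d_zeta[OF vuU[OF u]]]) (auto intro!: derivative_eq_intros)
    hence "((\<lambda>u. wzeta \<sigma> (v - u) - wzeta \<sigma> v) has_field_derivative wp \<sigma> (v - u)) (at u)" by simp
    thus ?thesis
      using has_field_derivative_transform_within_open[OF _ Bopen u, of _ _ "deriv \<psi>"] deriv\<psi> by auto
  qed
  have dvu: "((\<lambda>u. v - u) has_field_derivative -1) (at u)" for u
    by (auto intro!: derivative_eq_intros)
  have higher: "\<forall>u\<in>B. (deriv ^^ n) (deriv (deriv \<psi>)) u
      = (-1)^n * leval (Q n) (wp \<sigma> (v - u)) (deriv (wp \<sigma>) (v - u)) (g2/2)" for n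
  proof (induction n)
    case 0
    show ?case using DERIV_imp_deriv[OF d2\<psi>] by (simp add: leval_def)
  next
    case (Suc n)
    show ?case
    proof
      fix u assume u: "u \<in> B"
      have "((\<lambda>u. (-1)^n * leval (Q n) (wp \<sigma> (v - u)) (deriv (wp \<sigma>) (v - u)) (g2/2)) has_field_derivative
         (-1)^n * (leval (DL (Q n)) (wp \<sigma> (v - u)) (deriv (wp \<sigma>) (v - u)) (g2/2) * (-1))) (at u)"
        using DERIV_cmult[OF DERIV_chain2[where g = "\<lambda>u. v - u" and x = u, OF d_leval[OF vuU[OF u]] dvu], of "(-1)^n"]
        by simp
      hence "((deriv ^^ n) (deriv (deriv \<psi>)) has_field_derivative
         (-1)^Suc n * leval (Q (Suc n)) (wp \<sigma> (v - u)) (deriv (wp \<sigma>) (v - u)) (g2/2)) (at u)"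
        using has_field_derivative_transform_within_open[OF _ Bopen u] Suc.IH by (auto simp: algebra_simps)
      thus "(deriv ^^ Suc n) (deriv (deriv \<psi>)) u =
         (-1)^Suc n * leval (Q (Suc n)) (wp \<sigma> (v - u)) (deriv (wp \<sigma>) (v - u)) (g2/2)"
        by (simp add: DERIV_imp_deriv)
    qed
  qed
  have holB: "\<psi> holomorphic_on ball 0 r"
    unfolding holomorphic_on_open[OF open_ball] using d\<psi> unfolding B_def by blast
  have "\<forall>u\<in>ball 0 r. (\<lambda>k. eval_mpoly3 (PP (k + 2)) (wp \<sigma> v) (deriv (wp \<sigma>) v) (g2 / 2)
                  * u ^ (k + 2) / fact (k + 2)) sums wpsi \<sigma> u v"
  proof
    fix u :: complex assume u: "u \<in> ball 0 r"
    have "(\<lambda>n. (deriv ^^ n) \<psi> 0 / fact n * (u - 0)^n) sums \<psi> u"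
      by (rule holomorphic_power_series[OF holB u])
    from sums_split_initial_segment[OF this, of 2]
    have S: "(\<lambda>k. (deriv ^^ (k + 2)) \<psi> 0 / fact (k + 2) * u^(k + 2)) sums (\<psi> u - (\<psi> 0 + deriv \<psi> 0 * u))"
      by (simp add: numeral_2_eq_2)
    have B0: "0 \<in> B" using r by (simp add: B_def)
    have p0: "\<psi> 0 = 0" by (simp add: \<psi>_eq F_def v)
    have p1: "deriv \<psi> 0 = 0" using deriv\<psi>[OF B0] by simp
    have coef: "(deriv ^^ (k + 2)) \<psi> 0 = eval_mpoly3 (PP (k + 2)) (wp \<sigma> v) (deriv (wp \<sigma>) v) (g2 / 2)" for k
    proof -
      have "(deriv ^^ (k + 2)) \<psi> 0 = (deriv ^^ k) (deriv (deriv \<psi>)) 0"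
        by (simp only: funpow_add o_def) (simp add: numeral_2_eq_2)
      also have "\<dots> = (-1)^k * leval (Q k) (wp \<sigma> v) (deriv (wp \<sigma>) v) (g2/2)"
        using higher[of k] B0 by simp
      also have "\<dots> = eval_mpoly3 (PP (k + 2)) (wp \<sigma> v) (deriv (wp \<sigma>) v) (g2 / 2)"
        by (simp add: PP_def toC_eval leval_sgnL)
      finally show ?thesis .
    qed
    show "(\<lambda>k. eval_mpoly3 (PP (k + 2)) (wp \<sigma> v) (deriv (wp \<sigma>) v) (g2 / 2)
                  * u ^ (k + 2) / fact (k + 2)) sums wpsi \<sigma> u v"
      using S unfolding coef p0 p1 by (simp add: \<psi>_def)
  qed
  thus ?thesis using eventually_nhds_ball[OF r(1), of 0] by (auto elim: eventually_mono)
qed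

end

theorem mainTheorem10:
  shows "\<exists>P :: nat \<Rightarrow> (nat \<times> nat \<times> nat \<Rightarrow> int).
     (\<forall>k. int_mpoly3 (P k)) \<and>
     (\<forall>g2 g3 \<sigma> v. weierstrass_sigma g2 g3 \<sigma> \<and> \<sigma> v \<noteq> 0 \<longrightarrow>
        (\<forall>\<^sub>F u in nhds 0.
           (\<lambda>k. eval_mpoly3 (P (k + 2)) (wp \<sigma> v) (deriv (wp \<sigma>) v) (g2 / 2)
                  * u ^ (k + 2) / fact (k + 2)) sums wpsi \<sigma> u v))"
proof (intro exI[of _ PP] conjI allI impI)
  show "int_mpoly3 (PP k)" for k by (simp add: PP_def toC_int)
  fix g2 g3 \<sigma> v assume "weierstrass_sigma g2 g3 \<sigma> \<and> \<sigma> v \<noteq> 0"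
  then interpret ws g2 g3 \<sigma> by unfold_locales auto
  show "\<forall>\<^sub>F u in nhds 0.
           (\<lambda>k. eval_mpoly3 (PP (k + 2)) (wp \<sigma> v) (deriv (wp \<sigma>) v) (g2 / 2)
                  * u ^ (k + 2) / fact (k + 2)) sums wpsi \<sigma> u v"
    using main \<open>weierstrass_sigma g2 g3 \<sigma> \<and> \<sigma> v \<noteq> 0\<close> by blast
qed

end
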